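(* Let $r\ge 2$, $\alpha=2^r-1$, $\beta=2^{r-1}(2^r-1)$, let $\mathcal{C}\subseteq\mathbb{Z}_2^\alpha\times\mathbb{Z}_4^\beta$ be a $\mathbb{Z}_2\mathbb{Z}_4$-additive 1-perfect code and $D=\mathcal{C}^\perp$. Then every nonzero codeword of $D$ has weight $2^{2r-1}$.
   Context: A $\mathbb{Z}_2\mathbb{Z}_4$-additive code is an additive subgroup of $\mathbb{Z}_2^\alpha\times\mathbb{Z}_4^\beta$; vectors are $\mathbf{u}=(u\mid u')$ with $u\in\mathbb{Z}_2^\alpha$, $u'\in\mathbb{Z}_4^\beta$. The weight is $w(\mathbf{u})=w_H(u)+w_L(u')$ (Hamming weight plus Lee weight, Lee weights of $0,1,2,3$ being $0,1,2,1$). The Gray map $\phi:\mathbb{Z}_4\to\mathbb{Z}_2^2$ is $0\mapsto(0,0),1\mapsto(0,1),2\mapsto(1,1),3\mapsto(1,0)$, $\Phi(u\mid u')=(u\mid\phi(u'_1),\dots,\phi(u'_\beta))$. A binary code $C\subseteq\mathbb{Z}_2^n$ is 1-perfect if the Hamming balls of radius 1 around its codewords partition $\mathbb{Z}_2^n$; a $\mathbb{Z}_2\mathbb{Z}_4$-additive code is 1-perfect if its Gray image is. The dual is $\mathcal{C}^\perp=\{\mathbf{v}:\mathbf{u}\cdot\mathbf{v}=0\ \forall\mathbf{u}\in\mathcal{C}\}$ with $\mathbf{u}\cdot\mathbf{v}=2\sum_{i=1}^\alpha u_iv_i+\sum_{j=1}^\beta u'_jv'_j\in\mathbb{Z}_4$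 (binary entries read as $0,1\in\mathbb{Z}_4$). *)

theory Defs
  imports Main
begin

text \<open>Vectors of Z2^alpha x Z4^beta are pairs of lists of naturals: the binary part
  has entries in {0,1}, the quaternary part entries in {0,1,2,3}.\<close>

type_synonym z2z4vec = "nat list \<times> nat list"

definition z2z4_space :: "nat \<Rightarrow> nat \<Rightarrow> z2z4vec set" where
  "z2z4_space a b = {(u, u'). length u = a \<and> set u \<subseteq> {0,1} \<and>
                              length u' = b \<and> set u' \<subseteq> {0,1,2,3}}"

definition z2z4_zero :: "nat \<Rightarrow> nat \<Rightarrow> z2z4vec" where
  "z2z4_zero a b = (replicate a 0, replicate b 0)"

definition z2z4_add :: "z2z4vec \<Rightarrow> z2z4vec \<Rightarrow> z2z4vec" where
  "z2z4_add x y = (map2 (\<lambda>p q. (p + q) mod 2) (fst x) (fst y),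
                   map2 (\<lambda>p q. (p + q) mod 4) (snd x) (snd y))"

definition z2z4_neg :: "z2z4vec \<Rightarrow> z2z4vec" where
  "z2z4_neg x = (map (\<lambda>p. (2 - p) mod 2) (fst x), map (\<lambda>p. (4 - p) mod 4) (snd x))"

definition z2z4_additive :: "nat \<Rightarrow> nat \<Rightarrow> z2z4vec set \<Rightarrow> bool" where
  "z2z4_additive a b C \<longleftrightarrow> C \<subseteq> z2z4_space a b \<and> z2z4_zero a b \<in> C \<and>
     (\<forall>x\<in>C. \<forall>y\<in>C. z2z4_add x y \<in> C) \<and> (\<forall>x\<in>C. z2z4_neg x \<in> C)"

definition lee_weight :: "nat \<Rightarrow> nat" where
  "lee_weight x = (if x = 0 then 0 else if x = 2 then 2 else 1)"

definition z2z4_weight :: "z2z4vec \<Rightarrow> nat" where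
  "z2z4_weight x = length (filter (\<lambda>p. p \<noteq> 0) (fst x)) + sum_list (map lee_weight (snd x))"

definition gray :: "nat \<Rightarrow> nat list" where
  "gray x = (if x = 0 then [0,0] else if x = 1 then [0,1] else if x = 2 then [1,1] else [1,0])"

definition Gray :: "z2z4vec \<Rightarrow> nat list" where
  "Gray x = fst x @ concat (map gray (snd x))"

definition bin_space :: "nat \<Rightarrow> nat list set" where
  "bin_space n = {v. length v = n \<and> set v \<subseteq> {0,1}}"

definition hamming_dist :: "nat list \<Rightarrow> nat list \<Rightarrow> nat" where
  "hamming_dist x y = length (filter (\<lambda>(p,q). p \<noteq> q) (zip x y))"

definition one_perfect :: "nat \<Rightarrow> nat list set \<Rightarrow> bool" where
  "one_perfect n C \<longleftrightarrow> C \<subseteq> bin_space n \<and>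
     (\<forall>x\<in>bin_space n. \<exists>!c. c \<in> C \<and> hamming_dist x c \<le> 1)"

definition z2z4_one_perfect :: "nat \<Rightarrow> nat \<Rightarrow> z2z4vec set \<Rightarrow> bool" where
  "z2z4_one_perfect a b C \<longleftrightarrow> one_perfect (a + 2 * b) (Gray ` C)"

definition z2z4_inner :: "z2z4vec \<Rightarrow> z2z4vec \<Rightarrow> nat" where
  "z2z4_inner x y = (2 * sum_list (map2 (*) (fst x) (fst y))
                     + sum_list (map2 (*) (snd x) (snd y))) mod 4"

definition z2z4_dual :: "nat \<Rightarrow> nat \<Rightarrow> z2z4vec set \<Rightarrow> z2z4vec set" where
  "z2z4_dual a b C = {v \<in> z2z4_space a b. \<forall>u\<in>C. z2z4_inner u v = 0}"

end

theory Submission imports Defs "HOL-Number_Theory.Cong" begin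

lemma space_Suc1: "z2z4_space (Suc a) b = (\<lambda>(p,(u,u')). (p#u,u')) ` ({0,1} \<times> z2z4_space a b)"
  apply (auto simp: z2z4_space_def length_Suc_conv image_iff)
  done

lemma space_Suc2: "z2z4_space a (Suc b) = (\<lambda>(p,(u,u')). (u,p#u')) ` ({0,1,2,3} \<times> z2z4_space a b)"
  apply (auto simp: z2z4_space_def length_Suc_conv image_iff)
  done

lemma space_00: "z2z4_space 0 0 = {([],[])}"
  by (auto simp: z2z4_space_def)

lemma finite_space: "finite (z2z4_space a b)"
proof -
  have "z2z4_space a b \<subseteq> {xs. set xs \<subseteq> {0,1} \<and> length xs = a} \<times> {xs. set xs \<subseteq> {0,1,2,3} \<and> length xs = b}"
    by (auto simp: z2z4_space_def)
  moreover have "finite ({xs. set xs \<subseteq> {0,1::nat} \<and> length xs = a} \<times> {xs. set xs \<subseteq> {0,1,2,3::nat} \<and> length xs = b})"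
    by (intro finite_cartesian_product finite_lists_length_eq) auto
  ultimately show ?thesis by (rule finite_subset)
qed

lemma sum_Suc1: "(\<Sum>x\<in>z2z4_space (Suc a) b. h x) = (\<Sum>p\<in>{0,1}. \<Sum>u\<in>z2z4_space a b. h (p#fst u, snd u))"
proof -
  have inj: "inj_on (\<lambda>(p,(u,u')). (p#u,u')) ({0,1} \<times> z2z4_space a b)"
    by (auto simp: inj_on_def)
  have "(\<Sum>x\<in>z2z4_space (Suc a) b. h x) = (\<Sum>y\<in>{0,1} \<times> z2z4_space a b. h ((\<lambda>(p,(u,u')). (p#u,u')) y))"
    unfolding space_Suc1 by (rule sum.reindex[OF inj, unfolded comp_def])
  also have "\<dots> = (\<Sum>p\<in>{0,1}. \<Sum>u\<in>z2z4_space a b. h (p#fst u, snd u))"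
    unfolding sum.cartesian_product by (rule sum.cong) (auto split: prod.splits)
  finally show ?thesis .
qed

lemma sum_Suc2: "(\<Sum>x\<in>z2z4_space a (Suc b). h x) = (\<Sum>p\<in>{0,1,2,3}. \<Sum>u\<in>z2z4_space a b. h (fst u, p#snd u))"
proof -
  have inj: "inj_on (\<lambda>(p,(u,u')). (u,p#u')) ({0,1,2,3} \<times> z2z4_space a b)"
    by (auto simp: inj_on_def)
  have "(\<Sum>x\<in>z2z4_space a (Suc b). h x) = (\<Sum>y\<in>{0,1,2,3} \<times> z2z4_space a b. h ((\<lambda>(p,(u,u')). (u,p#u')) y))"
    unfolding space_Suc2 by (rule sum.reindex[OF inj, unfolded comp_def])
  also have "\<dots> = (\<Sum>p\<in>{0,1,2,3}. \<Sum>u\<in>z2z4_space a b. h (fst u, p#snd u))"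
    unfolding sum.cartesian_product by (rule sum.cong) (auto split: prod.splits)
  finally show ?thesis .
qed

definition Rr :: "z2z4vec \<Rightarrow> z2z4vec \<Rightarrow> nat" where
  "Rr x v = 2 * sum_list (map2 (*) (fst x) (fst v)) + sum_list (map2 (*) (snd x) (snd v))"

definition gg :: "nat \<Rightarrow> int" where
  "gg k = (if k mod 4 = 0 then 1 else if k mod 4 = 2 then -1 else 0)"

lemma Rr_cons1: "Rr (p#u,u') (q#w,w') = 2*p*q + Rr (u,u') (w,w')"
  by (simp add: Rr_def)
lemma Rr_cons2: "Rr (u,p#u') (w,q#w') = p*q + Rr (u,u') (w,w')"
  by (simp add: Rr_def)

lemma map2_rep0: "sum_list (map2 (*) xs (replicate n (0::nat))) = 0"
proof (induction xs arbitrary: n)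
  case (Cons x xs) thus ?case by (cases n) auto
qed simp

lemma Rr_zero: "Rr u (z2z4_zero a b) = 0"
  by (simp add: Rr_def z2z4_zero_def map2_rep0)

lemma zero_Suc1: "z2z4_zero (Suc a) b = (0 # fst (z2z4_zero a b), snd (z2z4_zero a b))"
  by (simp add: z2z4_zero_def)
lemma zero_Suc2: "z2z4_zero a (Suc b) = (fst (z2z4_zero a b), 0 # snd (z2z4_zero a b))"
  by (simp add: z2z4_zero_def)

lemma gg_mod: "gg (k mod 4) = gg k" by (simp add: gg_def)
lemma gg_cong: "k mod 4 = l mod 4 \<Longrightarrow> gg k = gg l" by (simp add: gg_def)

lemma gg_add4: "gg (k + 4) = gg k" by (simp add: gg_def)

lemma gg_4q: "gg (4*q + c) = gg c" by (rule gg_cong) simp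

lemma gg_red: "gg (t + c) = gg (t mod 4 + c)"
  by (rule gg_cong) (simp only: mod_add_left_eq)

lemma mod4_cases: obtains "t mod 4 = 0" | "t mod 4 = 1" | "t mod 4 = 2" | "t mod 4 = (3::nat)"
proof -
  have "t mod 4 < 4" by simp
  thus ?thesis using that by linarith
qed

lemma gg_plus2: "gg (k + 2) = - gg k"
proof -
  have "gg k = gg (k mod 4 + 0)" using gg_red[of k 0] by simp
  thus ?thesis unfolding gg_red[of k 2] by (cases rule: mod4_cases[of k]) (simp_all add: gg_def)
qed

lemma gg_sum4: "gg t + gg (t+1) + gg (t+2) + gg (t+3) = 0"
proof -
  have "gg t = gg (t mod 4 + 0)" using gg_red[of t 0] by simp
  thus ?thesis unfolding gg_red[of t 1] gg_red[of t 2] gg_red[of t 3]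
    by (cases rule: mod4_cases[of t]) (simp_all add: gg_def)
qed

lemma card_space_pos: "card (z2z4_space a b) > 0"
proof -
  have "z2z4_zero a b \<in> z2z4_space a b" by (auto simp: z2z4_zero_def z2z4_space_def)
  thus ?thesis using finite_space card_gt_0_iff by blast
qed

lemma cz_step1:
  assumes IH: "\<And>v t. v \<in> z2z4_space a b \<Longrightarrow> v \<noteq> z2z4_zero a b \<Longrightarrow> (\<Sum>x\<in>z2z4_space a b. gg (Rr x v + t)) = 0"
    and v: "v \<in> z2z4_space (Suc a) b" "v \<noteq> z2z4_zero (Suc a) b"
  shows "(\<Sum>x\<in>z2z4_space (Suc a) b. gg (Rr x v + t)) = 0"
proof -
  obtain q w w' where vq: "v = (q#w, w')" and q: "q \<in> {0,1}" and w: "(w,w') \<in> z2z4_space a b"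
    using v(1) unfolding space_Suc1 by auto
  have "(\<Sum>x\<in>z2z4_space (Suc a) b. gg (Rr x v + t))
     = (\<Sum>u\<in>z2z4_space a b. gg (Rr u (w,w') + t)) + (\<Sum>u\<in>z2z4_space a b. gg (Rr u (w,w') + (2*q + t)))"
    by (simp add: sum_Suc1 vq Rr_cons1 add.assoc add.left_commute)
  also have "\<dots> = 0"
  proof (cases "(w,w') = z2z4_zero a b")
    case True
    have ww: "w = fst (z2z4_zero a b)" "w' = snd (z2z4_zero a b)" using True by (metis fst_conv snd_conv)+
    hence "q = 1" using v(2) q by (auto simp: vq zero_Suc1)
    have "gg (2 + t) = - gg t" using gg_plus2[of t] by (simp add: add.commute)
    thus ?thesis using True \<open>q = 1\<close> by (simp add: Rr_zero)
  next
    case False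
    thus ?thesis using IH w by simp
  qed
  finally show ?thesis .
qed

lemma cz_step2:
  assumes IH: "\<And>v t. v \<in> z2z4_space a b \<Longrightarrow> v \<noteq> z2z4_zero a b \<Longrightarrow> (\<Sum>x\<in>z2z4_space a b. gg (Rr x v + t)) = 0"
    and v: "v \<in> z2z4_space a (Suc b)" "v \<noteq> z2z4_zero a (Suc b)"
  shows "(\<Sum>x\<in>z2z4_space a (Suc b). gg (Rr x v + t)) = 0"
proof -
  obtain q w w' where vq: "v = (w, q#w')" and q: "q \<in> {0,1,2,3}" and w: "(w,w') \<in> z2z4_space a b"
    using v(1) unfolding space_Suc2 by auto
  have "(\<Sum>x\<in>z2z4_space a (Suc b). gg (Rr x v + t))
     = (\<Sum>u\<in>z2z4_space a b. gg (Rr u (w,w') + t)) + (\<Sum>u\<in>z2z4_space a b. gg (Rr u (w,w') + (q + t)))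
       + (\<Sum>u\<in>z2z4_space a b. gg (Rr u (w,w') + (2*q + t))) + (\<Sum>u\<in>z2z4_space a b. gg (Rr u (w,w') + (3*q + t)))"
    by (simp add: sum_Suc2 vq Rr_cons2 add.assoc add.left_commute)
  also have "\<dots> = 0"
  proof (cases "(w,w') = z2z4_zero a b")
    case True
    have ww: "w = fst (z2z4_zero a b)" "w' = snd (z2z4_zero a b)" using True by (metis fst_conv snd_conv)+
    hence "q \<noteq> 0" using v(2) q by (auto simp: vq zero_Suc2)
    hence "q = 1 \<or> q = 2 \<or> q = 3" using q by auto
    hence "gg t + gg (q + t) + gg (2*q + t) + gg (3*q+t) = 0"
    proof -
      have e: "gg (q + t) = gg (t mod 4 + q)" "gg (2*q + t) = gg (t mod 4 + 2*q)" "gg (3*q + t) = gg (t mod 4 + 3*q)"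
        "gg t = gg (t mod 4 + 0)"
        using gg_red[of t q] gg_red[of t "2*q"] gg_red[of t "3*q"] gg_red[of t 0] by (simp_all add: add.commute)
      show ?thesis unfolding e using \<open>q = 1 \<or> q = 2 \<or> q = 3\<close>
        by (cases rule: mod4_cases[of t]; elim disjE; simp add: gg_def)
    qed
    thus ?thesis using True by (simp add: Rr_zero flip: distrib_left)
  next
    case False
    thus ?thesis using IH w by simp
  qed
  finally show ?thesis .
qed

lemma char_zero:
  "v \<in> z2z4_space a b \<Longrightarrow> v \<noteq> z2z4_zero a b \<Longrightarrow> (\<Sum>x\<in>z2z4_space a b. gg (Rr x v + t)) = 0"
proof (induction a arbitrary: v t)
  case 0
  then show ?case
  proof (induction b arbitrary: v t)
    case 0 thus ?case by (auto simp: space_00 z2z4_zero_def)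
  next
    case (Suc b) show ?case by (rule cz_step2[OF Suc.IH Suc.prems])
  qed
next
  case (Suc a) show ?case by (rule cz_step1[OF Suc.IH Suc.prems])
qed

lemma weight_cons1: "z2z4_weight (p#u,u') = (if p = 0 then 0 else 1) + z2z4_weight (u,u')"
  by (simp add: z2z4_weight_def)
lemma weight_cons2: "z2z4_weight (u,p#u') = lee_weight p + z2z4_weight (u,u')"
  by (simp add: z2z4_weight_def)

lemma zero_in_space: "z2z4_zero a b \<in> z2z4_space a b"
  by (auto simp: z2z4_zero_def z2z4_space_def)

lemma weight0: "u \<in> z2z4_space a b \<Longrightarrow> z2z4_weight u = 0 \<longleftrightarrow> u = z2z4_zero a b"
proof
  assume u: "u \<in> z2z4_space a b" and w: "z2z4_weight u = 0"
  have f: "\<forall>x\<in>set (fst u). x = 0" using w by (auto simp: z2z4_weight_def filter_empty_conv)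
  have "\<forall>x\<in>set (snd u). lee_weight x = 0" using w by (auto simp: z2z4_weight_def sum_list_eq_0_iff)
  hence s: "\<forall>x\<in>set (snd u). x = 0" by (auto simp: lee_weight_def split: if_splits)
  have "fst u = replicate a 0" using f u replicate_length_same[of "fst u" 0]
    by (auto simp: z2z4_space_def)
  moreover have "snd u = replicate b 0" using s u replicate_length_same[of "snd u" 0]
    by (auto simp: z2z4_space_def)
  ultimately show "u = z2z4_zero a b" by (simp add: z2z4_zero_def prod_eq_iff)
next
  assume "u = z2z4_zero a b"
  thus "z2z4_weight u = 0" by (simp add: z2z4_zero_def z2z4_weight_def lee_weight_def)
qed

lemma sum_zero_only: "(\<Sum>u\<in>z2z4_space a b. if z2z4_weight u = 0 then f u else 0) = (f (z2z4_zero a b) :: int)"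
proof -
  have "(\<Sum>u\<in>z2z4_space a b. if z2z4_weight u = 0 then f u else 0)
      = (\<Sum>u\<in>z2z4_space a b. if u = z2z4_zero a b then f u else 0)"
    by (rule sum.cong) (auto simp: weight0)
  also have "\<dots> = f (z2z4_zero a b)"
    using finite_space zero_in_space by (simp add: sum.delta')
  finally show ?thesis .
qed

lemma Rr_zero_left: "Rr (z2z4_zero a b) v = 0"
proof -
  have "\<And>xs n. sum_list (map2 (*) (replicate n (0::nat)) xs) = 0"
  proof -
    fix xs n show "sum_list (map2 (*) (replicate n (0::nat)) xs) = 0"
    proof (induction xs arbitrary: n)
      case (Cons x xs) thus ?case by (cases n) auto
    qed simp
  qed
  thus ?thesis by (simp add: Rr_def z2z4_zero_def)
qed

definition Ew :: "z2z4vec \<Rightarrow> z2z4vec \<Rightarrow> int" where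
  "Ew v e = (if z2z4_weight e \<le> 1 then gg (Rr e v) else 0)"

lemma ec_step1:
  assumes IH: "\<And>v. v \<in> z2z4_space a b \<Longrightarrow> (\<Sum>e\<in>z2z4_space a b. Ew v e) = 1 + int a + 2 * int b - 2 * int (z2z4_weight v)"
    and v: "v \<in> z2z4_space (Suc a) b"
  shows "(\<Sum>e\<in>z2z4_space (Suc a) b. Ew v e) = 1 + int (Suc a) + 2 * int b - 2 * int (z2z4_weight v)"
proof -
  obtain q w w' where vq: "v = (q#w, w')" and q: "q \<in> {0,1}" and w: "(w,w') \<in> z2z4_space a b"
    using v(1) unfolding space_Suc1 by auto
  have "(\<Sum>e\<in>z2z4_space (Suc a) b. Ew v e)
     = (\<Sum>u\<in>z2z4_space a b. Ew (w,w') u) + (\<Sum>u\<in>z2z4_space a b. if z2z4_weight u = 0 then gg (2*q + Rr u (w,w')) else 0)"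
  proof -
    have "\<And>u. Ew v (0#fst u, snd u) = Ew (w,w') u" by (simp add: Ew_def vq Rr_def weight_cons1)
    moreover have "\<And>u. Ew v (1#fst u, snd u) = (if z2z4_weight u = 0 then gg (2*q + Rr u (w,w')) else 0)"
      by (simp add: Ew_def vq Rr_def weight_cons1 add.assoc)
    ultimately show ?thesis by (simp add: sum_Suc1)
  qed
  also have "\<dots> = 1 + int a + 2 * int b - 2 * int (z2z4_weight (w,w')) + gg (2*q)"
    using IH[OF w] by (simp add: sum_zero_only Rr_zero_left)
  also have "\<dots> = 1 + int (Suc a) + 2 * int b - 2 * int (z2z4_weight v)"
    using q by (auto simp: vq weight_cons1 gg_def)
  finally show ?thesis .
qed

lemma ec_step2:
  assumes IH: "\<And>v. v \<in> z2z4_space a b \<Longrightarrow> (\<Sum>e\<in>z2z4_space a b. Ew v e) = 1 + int a + 2 * int b - 2 * int (z2z4_weight v)"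
    and v: "v \<in> z2z4_space a (Suc b)"
  shows "(\<Sum>e\<in>z2z4_space a (Suc b). Ew v e) = 1 + int a + 2 * int (Suc b) - 2 * int (z2z4_weight v)"
proof -
  obtain q w w' where vq: "v = (w, q#w')" and q: "q \<in> {0,1,2,3}" and w: "(w,w') \<in> z2z4_space a b"
    using v(1) unfolding space_Suc2 by auto
  have "(\<Sum>e\<in>z2z4_space a (Suc b). Ew v e)
     = (\<Sum>u\<in>z2z4_space a b. Ew (w,w') u) + (\<Sum>u\<in>z2z4_space a b. if z2z4_weight u = 0 then gg (q + Rr u (w,w')) else 0)
       + (\<Sum>u\<in>z2z4_space a b. if z2z4_weight u = 0 then gg (3*q + Rr u (w,w')) else 0)"
  proof -
    have "\<And>u. Ew v (fst u, 0#snd u) = Ew (w,w') u" by (simp add: Ew_def vq Rr_def weight_cons2 lee_weight_def)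
    moreover have "\<And>u. Ew v (fst u, 1#snd u) = (if z2z4_weight u = 0 then gg (q + Rr u (w,w')) else 0)"
      by (simp add: Ew_def vq Rr_def weight_cons2 lee_weight_def add.assoc add.left_commute)
    moreover have "\<And>u. Ew v (fst u, 2#snd u) = 0"
      by (simp add: Ew_def weight_cons2 lee_weight_def)
    moreover have "\<And>u. Ew v (fst u, 3#snd u) = (if z2z4_weight u = 0 then gg (3*q + Rr u (w,w')) else 0)"
      by (simp add: Ew_def vq Rr_def weight_cons2 lee_weight_def add.assoc add.left_commute)
    ultimately show ?thesis by (simp add: sum_Suc2 add.assoc)
  qed
  also have "\<dots> = 1 + int a + 2 * int b - 2 * int (z2z4_weight (w,w')) + gg q + gg (3*q)"
    using IH[OF w] by (simp add: sum_zero_only Rr_zero_left)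
  also have "\<dots> = 1 + int a + 2 * int (Suc b) - 2 * int (z2z4_weight v)"
    using q by (auto simp: vq weight_cons2 gg_def lee_weight_def)
  finally show ?thesis .
qed

lemma e_count:
  "v \<in> z2z4_space a b \<Longrightarrow> (\<Sum>e\<in>z2z4_space a b. Ew v e) = 1 + int a + 2 * int b - 2 * int (z2z4_weight v)"
proof (induction a arbitrary: v)
  case 0
  then show ?case
  proof (induction b arbitrary: v)
    case 0 thus ?case by (auto simp: space_00 Ew_def z2z4_weight_def Rr_def gg_def)
  next
    case (Suc b) show ?case by (rule ec_step2[OF Suc.IH Suc.prems])
  qed
next
  case (Suc a) show ?case by (rule ec_step1[OF Suc.IH Suc.prems])
qed

lemma sum_map2_addmod:
  assumes "length c = length e" "length e = length v"
  shows "sum_list (map2 (*) (map2 (\<lambda>p q. (p + q) mod k) c e) v) mod k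
       = (sum_list (map2 (*) c v) + sum_list (map2 (*) e v)) mod (k::nat)"
  using assms
proof (induction c e v rule: list_induct3)
  case Nil thus ?case by simp
next
  case (Cons x xs y ys z zs)
  let ?S1 = "sum_list (map2 (*) (map2 (\<lambda>p q. (p + q) mod k) xs ys) zs)"
  let ?S2 = "sum_list (map2 (*) xs zs)"
  let ?S3 = "sum_list (map2 (*) ys zs)"
  have "((x + y) mod k * z + ?S1) mod k = (((x + y) mod k * z) mod k + ?S1 mod k) mod k"
    by (simp add: mod_add_eq)
  also have "\<dots> = (((x + y) * z) mod k + (?S2 + ?S3) mod k) mod k"
    using Cons.IH by (simp add: mod_mult_left_eq)
  also have "\<dots> = (x * z + ?S2 + (y * z + ?S3)) mod k"
    by (simp add: mod_add_eq algebra_simps)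
  finally show ?case by simp
qed

lemma space_fst: "x \<in> z2z4_space a b \<Longrightarrow> length (fst x) = a \<and> set (fst x) \<subseteq> {0,1}"
  by (auto simp: z2z4_space_def)
lemma space_snd: "x \<in> z2z4_space a b \<Longrightarrow> length (snd x) = b \<and> set (snd x) \<subseteq> {0,1,2,3}"
  by (auto simp: z2z4_space_def)
lemma space_iff: "x \<in> z2z4_space a b \<longleftrightarrow> length (fst x) = a \<and> set (fst x) \<subseteq> {0,1} \<and> length (snd x) = b \<and> set (snd x) \<subseteq> {0,1,2,3}"
  by (cases x) (auto simp: z2z4_space_def)

lemma Rr_add:
  assumes "c \<in> z2z4_space a b" "e \<in> z2z4_space a b" "v \<in> z2z4_space a b"
  shows "Rr (z2z4_add c e) v mod 4 = (Rr c v + Rr e v) mod 4"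
proof -
  let ?A = "sum_list (map2 (*) (map2 (\<lambda>p q. (p + q) mod 2) (fst c) (fst e)) (fst v))"
  let ?B = "sum_list (map2 (*) (map2 (\<lambda>p q. (p + q) mod 4) (snd c) (snd e)) (snd v))"
  have A: "?A mod 2 = (sum_list (map2 (*) (fst c) (fst v)) + sum_list (map2 (*) (fst e) (fst v))) mod 2"
    using assms by (intro sum_map2_addmod) (auto simp: space_iff)
  have B: "?B mod 4 = (sum_list (map2 (*) (snd c) (snd v)) + sum_list (map2 (*) (snd e) (snd v))) mod 4"
    using assms by (intro sum_map2_addmod) (auto simp: space_iff)
  have A2: "(2 * ?A) mod 4 = (2 * sum_list (map2 (*) (fst c) (fst v)) + 2 * sum_list (map2 (*) (fst e) (fst v))) mod 4"
    using A mult_mod_right[of 2 ?A 2] mult_mod_right[of 2 "sum_list (map2 (*) (fst c) (fst v)) + sum_list (map2 (*) (fst e) (fst v))" 2]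
    by (simp add: distrib_left)
  have "Rr (z2z4_add c e) v mod 4 = (2 * ?A + ?B) mod 4" by (simp add: Rr_def z2z4_add_def)
  also have "\<dots> = ((2 * ?A) mod 4 + ?B mod 4) mod 4" by (simp add: mod_add_eq)
  also have "\<dots> = (Rr c v + Rr e v) mod 4" unfolding A2 B by (simp add: Rr_def mod_add_eq algebra_simps)
  finally show ?thesis .
qed

lemma add_space: "c \<in> z2z4_space a b \<Longrightarrow> e \<in> z2z4_space a b \<Longrightarrow> z2z4_add c e \<in> z2z4_space a b"
  by (auto simp: space_iff z2z4_add_def set_zip)

lemma length_gray: "length (gray x) = 2" by (simp add: gray_def)

lemma length_concat_gray: "length (concat (map gray xs)) = 2 * length xs"
  by (induction xs) (auto simp: length_gray)

lemma set_concat_gray: "set (concat (map gray xs)) \<subseteq> {0,1}"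
  by (auto simp: gray_def)

lemma Gray_bin: "x \<in> z2z4_space a b \<Longrightarrow> Gray x \<in> bin_space (a + 2*b)"
  using set_concat_gray[of "snd x"] by (auto simp: Gray_def bin_space_def space_iff length_concat_gray)

lemma ham_append: "length xs = length xs' \<Longrightarrow> hamming_dist (xs @ ys) (xs' @ ys') = hamming_dist xs xs' + hamming_dist ys ys'"
  by (simp add: hamming_dist_def zip_append)

lemma ham_bin:
  assumes "length c = length e" "set c \<subseteq> {0,1}" "set e \<subseteq> {0,1}"
  shows "hamming_dist (map2 (\<lambda>p q. (p + q) mod 2) c e) c = length (filter (\<lambda>p. p \<noteq> 0) e)"
  using assms
proof (induction c e rule: list_induct2)
  case Nil thus ?case by (simp add: hamming_dist_def)
next
  case (Cons x xs y ys)
  have "x \<in> {0,1}" "y \<in> {0,1}" using Cons.prems by auto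
  thus ?case using Cons by (auto simp: hamming_dist_def)
qed

lemma ham_gray: "x \<in> {0,1,2,3} \<Longrightarrow> y \<in> {0,1,2,3} \<Longrightarrow> hamming_dist (gray ((x + y) mod 4)) (gray x) = lee_weight y"
  by (elim insertE emptyE; simp add: hamming_dist_def gray_def lee_weight_def)

lemma ham_quat:
  assumes "length c = length e" "set c \<subseteq> {0,1,2,3}" "set e \<subseteq> {0,1,2,3}"
  shows "hamming_dist (concat (map gray (map2 (\<lambda>p q. (p + q) mod 4) c e))) (concat (map gray c)) = sum_list (map lee_weight e)"
  using assms
proof (induction c e rule: list_induct2)
  case Nil thus ?case by (simp add: hamming_dist_def)
next
  case (Cons x xs y ys)
  have "x \<in> {0,1,2,3}" "y \<in> {0,1,2,3}" using Cons.prems by auto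
  thus ?case using Cons by (simp add: ham_append length_gray ham_gray)
qed

lemma ham_add:
  assumes "c \<in> z2z4_space a b" "e \<in> z2z4_space a b"
  shows "hamming_dist (Gray (z2z4_add c e)) (Gray c) = z2z4_weight e"
proof -
  have l: "length (map2 (\<lambda>p q. (p + q) mod 2) (fst c) (fst e)) = length (fst c)"
    using assms by (simp add: space_iff)
  have h1: "hamming_dist (map2 (\<lambda>p q. (p + q) mod 2) (fst c) (fst e)) (fst c) = length (filter (\<lambda>p. p \<noteq> 0) (fst e))"
    using assms by (intro ham_bin) (auto simp: space_iff)
  have h2: "hamming_dist (concat (map gray (map2 (\<lambda>p q. (p + q) mod 4) (snd c) (snd e)))) (concat (map gray (snd c))) = sum_list (map lee_weight (snd e))"
    using assms by (intro ham_quat) (auto simp: space_iff)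
  show ?thesis unfolding Gray_def z2z4_add_def fst_conv snd_conv ham_append[OF l] h1 h2
    by (simp add: z2z4_weight_def)
qed

lemma gray_inj: "x \<in> {0,1,2,3} \<Longrightarrow> y \<in> {0,1,2,3} \<Longrightarrow> gray x = gray y \<Longrightarrow> x = y"
  by (auto simp: gray_def split: if_splits)

lemma concat_gray_inj:
  assumes "length xs = length ys" "set xs \<subseteq> {0,1,2,3}" "set ys \<subseteq> {0,1,2,3}"
    "concat (map gray xs) = concat (map gray ys)"
  shows "xs = ys"
  using assms
proof (induction xs ys rule: list_induct2)
  case Nil thus ?case by simp
next
  case (Cons x xs y ys)
  have l: "length (gray x) = length (gray y)" by (simp add: length_gray)
  from Cons.prems(3) have "gray x @ concat (map gray xs) = gray y @ concat (map gray ys)" by simp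
  hence g: "gray x = gray y" and c: "concat (map gray xs) = concat (map gray ys)"
    using append_eq_append_conv[OF disjI1[OF l]] by blast+
  have "x = y" using Cons.prems(1,2) g by (intro gray_inj) auto
  moreover have "xs = ys" using Cons.prems(1,2) c by (intro Cons.IH) auto
  ultimately show ?case by simp
qed

lemma Gray_inj:
  assumes "x \<in> z2z4_space a b" "y \<in> z2z4_space a b" "Gray x = Gray y"
  shows "x = y"
proof -
  have "fst x = fst y \<and> concat (map gray (snd x)) = concat (map gray (snd y))"
  proof -
    have l: "length (fst x) = length (fst y)" using assms by (simp add: space_iff)
    have "fst x @ concat (map gray (snd x)) = fst y @ concat (map gray (snd y))" using assms(3) unfolding Gray_def .
    thus ?thesis using append_eq_append_conv[OF disjI1[OF l]] by blast
  qed
  moreover have "snd x = snd y"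
  proof (rule concat_gray_inj)
    show "length (snd x) = length (snd y)" "set (snd x) \<subseteq> {0,1,2,3}" "set (snd y) \<subseteq> {0,1,2,3}"
      using assms(1,2) space_snd by blast+
    show "concat (map gray (snd x)) = concat (map gray (snd y))" using calculation by blast
  qed
  ultimately show ?thesis by (simp add: prod_eq_iff)
qed

lemma map2_cancel:
  assumes "length c = length e1" "length e1 = length e2" "set c \<subseteq> {0..<k}" "set e1 \<subseteq> {0..<k}" "set e2 \<subseteq> {0..<k}"
    "map2 (\<lambda>p q. (p + q) mod k) c e1 = map2 (\<lambda>p q. (p + q) mod (k::nat)) c e2"
  shows "e1 = e2"
  using assms
proof (induction c e1 e2 rule: list_induct3)
  case Nil thus ?case by simp
next
  case (Cons x xs y ys z zs)
  have "(x + y) mod k = (x + z) mod k" "y < k" "z < k" using Cons.prems by auto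
  hence "y = z" using cong_add_lcancel_nat[of x y z k] by (simp add: cong_def)
  thus ?case using Cons by auto
qed

lemma map2_sub:
  assumes "length c = length x" "set c \<subseteq> {0..<k}" "set x \<subseteq> {0..<k}"
  shows "map2 (\<lambda>p q. (p + q) mod k) c (map2 (\<lambda>c x. (x + k - c) mod (k::nat)) c x) = x"
  using assms
proof (induction c x rule: list_induct2)
  case Nil thus ?case by simp
next
  case (Cons a as b bs)
  have ab: "a < k" "b < k" using Cons.prems by auto
  have "(a + (b + k - a) mod k) mod k = (a + (b + k - a)) mod k" by (simp add: mod_add_right_eq)
  also have "\<dots> = b" using ab by simp
  finally show ?case using Cons by auto
qed

lemma sub_ex:
  assumes "c \<in> z2z4_space a b" "x \<in> z2z4_space a b"
  shows "\<exists>e\<in>z2z4_space a b. z2z4_add c e = x"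
proof -
  define e where "e = (map2 (\<lambda>c x. (x + 2 - c) mod 2) (fst c) (fst x), map2 (\<lambda>c x. (x + 4 - c) mod 4) (snd c) (snd x))"
  have "e \<in> z2z4_space a b" using assms by (auto simp: e_def space_iff set_zip)
  moreover have "fst (z2z4_add c e) = fst x"
    unfolding z2z4_add_def e_def fst_conv
    by (rule map2_sub) (use assms in \<open>auto simp: space_iff\<close>)
  moreover have "snd (z2z4_add c e) = snd x"
    unfolding z2z4_add_def e_def snd_conv
    by (rule map2_sub) (use assms in \<open>auto simp: space_iff\<close>)
  ultimately show ?thesis by (metis prod.collapse)
qed

lemma add_cancel:
  assumes "c \<in> z2z4_space a b" "e1 \<in> z2z4_space a b" "e2 \<in> z2z4_space a b" "z2z4_add c e1 = z2z4_add c e2"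
  shows "e1 = e2"
proof -
  have "fst e1 = fst e2"
  proof (rule map2_cancel[where k=2])
    show "map2 (\<lambda>p q. (p + q) mod 2) (fst c) (fst e1) = map2 (\<lambda>p q. (p + q) mod 2) (fst c) (fst e2)"
      using assms(4) by (simp add: z2z4_add_def prod_eq_iff)
  qed (use assms(1-3) in \<open>auto simp: space_iff\<close>)
  moreover have "snd e1 = snd e2"
  proof (rule map2_cancel[where k=4])
    show "map2 (\<lambda>p q. (p + q) mod 4) (snd c) (snd e1) = map2 (\<lambda>p q. (p + q) mod 4) (snd c) (snd e2)"
      using assms(4) by (simp add: z2z4_add_def prod_eq_iff)
  qed (use assms(1-3) in \<open>auto simp: space_iff\<close>)
  ultimately show ?thesis by (simp add: prod_eq_iff)
qed

lemma decomp:
  assumes add: "z2z4_additive a b C" and perf: "z2z4_one_perfect a b C"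
    and v: "v \<in> z2z4_dual a b C"
  shows "(\<Sum>x\<in>z2z4_space a b. gg (Rr x v)) = int (card C) * (\<Sum>e\<in>z2z4_space a b. Ew v e)"
proof -
  let ?S = "z2z4_space a b"
  let ?E = "{e \<in> ?S. z2z4_weight e \<le> 1}"
  have CS: "C \<subseteq> ?S" using add by (simp add: z2z4_additive_def)
  have vS: "v \<in> ?S" using v by (simp add: z2z4_dual_def)
  have P: "\<And>y. y \<in> bin_space (a + 2*b) \<Longrightarrow> \<exists>!c. c \<in> Gray ` C \<and> hamming_dist y c \<le> 1"
    using perf by (simp add: z2z4_one_perfect_def one_perfect_def)
  have bij: "bij_betw (\<lambda>(c,e). z2z4_add c e) (C \<times> ?E) ?S"
  proof (rule bij_betwI')
    fix ce1 ce2 assume m1: "ce1 \<in> C \<times> ?E" and m2: "ce2 \<in> C \<times> ?E"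
    obtain c1 e1 where ce1: "ce1 = (c1,e1)" by (cases ce1) blast
    obtain c2 e2 where ce2: "ce2 = (c2,e2)" by (cases ce2) blast
    have c1: "c1 \<in> ?S" "c1 \<in> C" and e1: "e1 \<in> ?S" "z2z4_weight e1 \<le> 1" using m1 CS ce1 by auto
    have c2: "c2 \<in> ?S" "c2 \<in> C" and e2: "e2 \<in> ?S" "z2z4_weight e2 \<le> 1" using m2 CS ce2 by auto
    show "((\<lambda>(c,e). z2z4_add c e) ce1 = (\<lambda>(c,e). z2z4_add c e) ce2) = (ce1 = ce2)"
    proof
      assume "(\<lambda>(c,e). z2z4_add c e) ce1 = (\<lambda>(c,e). z2z4_add c e) ce2"
      hence eq: "z2z4_add c1 e1 = z2z4_add c2 e2" by (simp add: ce1 ce2)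
      define x where "x = z2z4_add c1 e1"
      have xS: "x \<in> ?S" unfolding x_def by (rule add_space[OF c1(1) e1(1)])
      have h1: "hamming_dist (Gray x) (Gray c1) \<le> 1" unfolding x_def using ham_add[OF c1(1) e1(1)] e1(2) by simp
      have h2: "hamming_dist (Gray x) (Gray c2) \<le> 1" unfolding x_def eq using ham_add[OF c2(1) e2(1)] e2(2) by simp
      have "Gray c1 = Gray c2" using P[OF Gray_bin[OF xS]] h1 h2 c1(2) c2(2) by blast
      hence "c1 = c2" using Gray_inj c1(1) c2(1) by blast
      moreover hence "e1 = e2" using add_cancel[OF c1(1) e1(1) e2(1)] eq by simp
      ultimately show "ce1 = ce2" by (simp add: ce1 ce2)
    qed simp
  next
    fix ce assume "ce \<in> C \<times> ?E"
    thus "(\<lambda>(c,e). z2z4_add c e) ce \<in> ?S" using CS add_space by auto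
  next
    fix x assume xS: "x \<in> ?S"
    obtain gc where gc: "gc \<in> Gray ` C" "hamming_dist (Gray x) gc \<le> 1" using P[OF Gray_bin[OF xS]] by blast
    obtain c where c: "c \<in> C" "gc = Gray c" using gc(1) by blast
    have cS: "c \<in> ?S" using c CS by auto
    obtain e where e: "e \<in> ?S" "z2z4_add c e = x" using sub_ex[OF cS xS] by blast
    have "z2z4_weight e \<le> 1" using ham_add[OF cS e(1)] e(2) gc(2) c(2) by simp
    hence "(c,e) \<in> C \<times> ?E" using c e by simp
    thus "\<exists>ce\<in>C \<times> ?E. x = (\<lambda>(c,e). z2z4_add c e) ce" using e(2) by (intro bexI[of _ "(c,e)"]) auto
  qed
  have fin: "finite C" using CS finite_space finite_subset by blast
  have gc: "\<And>c e. c \<in> C \<Longrightarrow> e \<in> ?S \<Longrightarrow> gg (Rr (z2z4_add c e) v) = gg (Rr e v)"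
  proof -
    fix c e assume c: "c \<in> C" and e: "e \<in> ?S"
    have "Rr c v mod 4 = 0" using v c by (simp add: z2z4_dual_def z2z4_inner_def Rr_def)
    hence "Rr (z2z4_add c e) v mod 4 = Rr e v mod 4"
      using Rr_add[OF _ e vS, of c] c CS by (auto simp: mod_add_left_eq[symmetric])
    thus "gg (Rr (z2z4_add c e) v) = gg (Rr e v)" by (rule gg_cong)
  qed
  have "(\<Sum>x\<in>?S. gg (Rr x v)) = (\<Sum>ce\<in>C \<times> ?E. gg (Rr ((\<lambda>(c,e). z2z4_add c e) ce) v))"
    using sum.reindex_bij_betw[OF bij, of "\<lambda>x. gg (Rr x v)"] by simp
  also have "\<dots> = (\<Sum>c\<in>C. \<Sum>e\<in>?E. gg (Rr (z2z4_add c e) v))"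
    unfolding sum.cartesian_product by (rule sum.cong) (auto split: prod.splits)
  also have "\<dots> = (\<Sum>c\<in>C. \<Sum>e\<in>?E. gg (Rr e v))"
    by (intro sum.cong refl) (auto simp: gc)
  also have "\<dots> = int (card C) * (\<Sum>e\<in>?E. gg (Rr e v))" by simp
  also have "(\<Sum>e\<in>?E. gg (Rr e v)) = (\<Sum>e\<in>?S. Ew v e)"
    unfolding Ew_def using finite_space by (simp add: sum.inter_filter)
  finally show ?thesis .
qed

theorem lemma3p3:
  fixes r :: nat and C :: "z2z4vec set"
  assumes "r \<ge> 2"
    and "z2z4_additive (2^r - 1) (2^(r-1) * (2^r - 1)) C"
    and "z2z4_one_perfect (2^r - 1) (2^(r-1) * (2^r - 1)) C"
  shows "\<forall>v \<in> z2z4_dual (2^r - 1) (2^(r-1) * (2^r - 1)) C.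
           v \<noteq> z2z4_zero (2^r - 1) (2^(r-1) * (2^r - 1)) \<longrightarrow> z2z4_weight v = 2^(2*r - 1)"
proof (intro ballI impI)
  define a :: nat where "a = 2^r - 1"
  define b :: nat where "b = 2^(r-1) * (2^r - 1)"
  fix v assume v: "v \<in> z2z4_dual (2^r - 1) (2^(r-1) * (2^r - 1)) C"
    and nz: "v \<noteq> z2z4_zero (2^r - 1) (2^(r-1) * (2^r - 1))"
  have add: "z2z4_additive a b C" and perf: "z2z4_one_perfect a b C" and vD: "v \<in> z2z4_dual a b C"
    and nz': "v \<noteq> z2z4_zero a b"
    using assms v nz by (simp_all add: a_def b_def)
  have vS: "v \<in> z2z4_space a b" using vD by (simp add: z2z4_dual_def)
  have "(\<Sum>x\<in>z2z4_space a b. gg (Rr x v)) = 0" using char_zero[OF vS nz', of 0] by simp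
  hence prod0: "int (card C) * (\<Sum>e\<in>z2z4_space a b. Ew v e) = 0" using decomp[OF add perf vD] by simp
  have CS: "C \<subseteq> z2z4_space a b" and z: "z2z4_zero a b \<in> C" using add by (simp_all add: z2z4_additive_def)
  have "finite C" using CS finite_space finite_subset by blast
  hence "card C \<noteq> 0" using z by auto
  hence "(\<Sum>e\<in>z2z4_space a b. Ew v e) = 0" using prod0 by simp
  hence W: "2 * int (z2z4_weight v) = 1 + int a + 2 * int b" using e_count[OF vS] by simp
  obtain k where k: "r = Suc k" using assms(1) by (cases r) auto
  define N :: nat where "N = 2^k"
  have N1: "N \<ge> 1" by (simp add: N_def)
  have ia: "int a = 2 * int N - 1" using N1 by (simp add: a_def k N_def of_nat_diff)
  have ib: "int b = int N * (2 * int N - 1)" using N1 by (simp add: b_def k N_def of_nat_diff)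
  have "2 * int (z2z4_weight v) = 2 * (2 * int N * int N)" using W ia ib by (simp add: algebra_simps)
  hence "int (z2z4_weight v) = int (2 * N * N)" by simp
  hence "z2z4_weight v = 2 * N * N" by (simp only: of_nat_eq_iff)
  also have "\<dots> = 2^(2*r - 1)" by (simp add: k N_def power_add power_mult_distrib power2_eq_square[symmetric] power_mult[symmetric] mult.commute)
  finally show "z2z4_weight v = 2^(2*r - 1)" .
qed

end
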